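(* Let $\pi$ be a probability density on $(0,\infty)$ for which there exist $c>0$, $C>0$, $M_0>0$ such that $t\pi(t)\sim C/(\{1+\log(1+t)\}[1+\log\{1+\log(1+t)\}]^{1+c})$ as $t\to\infty$ and, for all $t>0$, $$t\pi(t)\le M_0\frac{1}{1+\log(1+1/t)}\frac{1}{1+\log(1+t)}\frac{1}{[1+\log\{1+\log(1+1/t)\}]^{1+c}}\frac{1}{[1+\log\{1+\log(1+t)\}]^{1+c}}.$$ For $\alpha>0$, $z\in\mathbb{R}$, $\gamma>0$, $t>0$ let $$f(\alpha,z,\gamma;t)=\int_0^\infty\frac{\alpha^\alpha\gamma}{\Gamma(\alpha)}\frac{e^{-\alpha/u}}{u^{1+\alpha}}\cdot\frac{t^\gamma e^{\gamma z}u\,\pi(t^\gamma e^{\gamma z}u)}{C/(\{1+\log(1+t)\}[1+\log\{1+\log(1+t)\}]^{1+c})}\,du.$$ Let $N>0$, let $t>0$ be fixed and let $x\in\mathbb{R}^p$. Then there exists $M>0$ such that for all $(\alpha,\tilde\beta,\gamma)\in(0,\infty)\times\mathbb{R}^p\times(0,\infty)$ with $|\log t+x^\top\tilde\beta|\ge N$, $$f(\alpha,x^\top\tilde\beta,\gamma;t)\le M\{1+\log(1+\gamma)\}.$$ *)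

theory Defs
  imports "HOL-Analysis.Analysis" "HOL-Library.Landau_Symbols"
begin

definition tailfun :: "real \<Rightarrow> real \<Rightarrow> real \<Rightarrow> real" where
  "tailfun c C t = C / ((1 + ln (1 + t)) * (1 + ln (1 + ln (1 + t))) powr (1 + c))"

definition prob_density_pos :: "(real \<Rightarrow> real) \<Rightarrow> bool" where
  "prob_density_pos \<pi> \<longleftrightarrow> \<pi> \<in> borel_measurable lborel \<and> (\<forall>t>0. 0 \<le> \<pi> t)
     \<and> (\<integral>\<^sup>+ t \<in> {0<..}. ennreal (\<pi> t) \<partial>lborel) = 1"

definition fS :: "(real \<Rightarrow> real) \<Rightarrow> real \<Rightarrow> real \<Rightarrow> real \<Rightarrow> real \<Rightarrow> real \<Rightarrow> real \<Rightarrow> ennreal" where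
  "fS \<pi> c C \<alpha> z \<gamma> t =
     (\<integral>\<^sup>+ u \<in> {0<..}. ennreal (
        (\<alpha> powr \<alpha> * \<gamma> / Gamma \<alpha>) * (exp (- \<alpha> / u) / u powr (1 + \<alpha>)) *
        ((t powr \<gamma> * exp (\<gamma> * z) * u * \<pi> (t powr \<gamma> * exp (\<gamma> * z) * u)) / tailfun c C t))
      \<partial>lborel)"

end

theory Submission
  imports Defs "HOL-Real_Asymp.Real_Asymp"
begin


lemma gamma_lb:
  fixes a :: real assumes a: "a > 0"
  shows "a powr a * exp (-(a+1)) \<le> Gamma (a+1)"
proof -
  let ?f = "\<lambda>t::real. t powr a / exp t"
  have G: "(?f has_integral Gamma (a+1)) {0..}"
    using Gamma_integral_real[of "a+1"] a by simp
  have cont: "continuous_on {a..a+1} ?f"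
    using a by (intro continuous_intros) auto
  have I: "(?f has_integral integral {a..a+1} ?f) {a..a+1}"
    using integrable_continuous_interval[OF cont] by (simp add: has_integral_integral)
  have le1: "integral {a..a+1} ?f \<le> Gamma (a+1)"
    by (rule has_integral_subset_le[OF _ I G]) (use a in auto)
  have C: "((\<lambda>x. a powr a * exp (-(a+1))) has_integral (a powr a * exp (-(a+1)))) {a..a+1}"
    using has_integral_const_real[of "a powr a * exp (-(a+1))" a "a+1"] by simp
  have "a powr a * exp (-(a+1)) \<le> integral {a..a+1} ?f"
  proof (rule has_integral_le[OF C I])
    fix x assume x: "x \<in> {a..a+1}"
    have "a powr a \<le> x powr a" using x a by (intro powr_mono2) auto
    moreover have "exp (-(a+1)) \<le> 1 / exp x" using x by (simp add: exp_minus_inverse exp_minus[symmetric] divide_inverse flip: exp_minus)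
    ultimately show "a powr a * exp (-(a+1)) \<le> x powr a / exp x"
      using x a by (metis divide_inverse mult_mono exp_ge_zero less_eq_real_def powr_ge_zero inverse_eq_divide)
  qed
  with le1 show ?thesis by linarith
qed

lemma gamma_lb2:
  fixes a :: real assumes a: "a > 0"
  shows "a powr (a-1) * exp (-(a+1)) \<le> Gamma a"
proof -
  have "Gamma (a+1) = a * Gamma a" using a by (intro Gamma_plus1) (auto elim!: nonpos_Ints_cases)
  moreover have "a powr a = a * a powr (a-1)" using a by (simp add: powr_diff)
  ultimately show ?thesis using gamma_lb[OF a] a by (simp add: mult.assoc)
qed



lemma psi_nonneg: fixes u :: real assumes "u > 0" shows "0 \<le> ln u + 1/u - 1"
proof -
  have "ln (1/u) \<le> 1/u - 1" using assms by (intro ln_le_minus_one) auto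
  thus ?thesis using assms by (simp add: ln_div)
qed

lemma qbound:
  fixes a u :: real assumes a: "a > 0" and u: "u > 0"
  shows "a powr a / Gamma a * (exp (-a/u) / u powr (1+a)) * u * (ln u + 1/u - 1) \<le> 1"
proof -
  define p where "p = ln u + 1/u - 1"
  have p0: "p \<ge> 0" using psi_nonneg[OF u] by (simp add: p_def)
  have G: "a powr (a-1) * exp (-(a+1)) \<le> Gamma a" by (rule gamma_lb2[OF a])
  have Gpos: "Gamma a > 0" using a by (simp add: Gamma_real_pos)
  have pp: "a powr (a-1) * exp (-(a+1)) > 0" using a by simp
  have e1: "a powr a / Gamma a * (exp (-a/u) / u powr (1+a)) * u
        = (a powr a * exp (-a/u) / u powr a) / Gamma a"
    using u by (simp add: powr_add field_simps)
  have "(a powr a * exp (-a/u) / u powr a) / Gamma a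
       \<le> (a powr a * exp (-a/u) / u powr a) / (a powr (a-1) * exp (-(a+1)))"
    by (intro divide_left_mono G) (use pp Gpos u in auto)
  also have "\<dots> = exp 1 * a * exp (- (a * p))"
  proof -
    have "a powr a = a * a powr (a-1)" using a by (simp add: powr_diff)
    moreover have "u powr a = exp (a * ln u)" using u by (simp add: powr_def mult.commute)
    ultimately have "(a powr a * exp (-a/u) / u powr a) / (a powr (a-1) * exp (-(a+1)))
        = a * (exp (-a/u) * exp (a+1) / exp (a * ln u))"
      using a by (simp add: exp_minus field_simps) (simp add: exp_add[symmetric])
    also have "exp (-a/u) * exp (a+1) / exp (a * ln u) = exp 1 * exp (- (a*p))"
      by (simp add: p_def exp_add[symmetric] exp_diff[symmetric] algebra_simps)
    finally show ?thesis by simp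
  qed
  finally have A: "a powr a / Gamma a * (exp (-a/u) / u powr (1+a)) * u \<le> exp 1 * a * exp (- (a * p))"
    using e1 by simp
  have B: "exp 1 * (a * p) * exp (- (a * p)) \<le> 1"
  proof -
    have "1 + (a*p - 1) \<le> exp (a*p - 1)" by (rule exp_ge_add_one_self)
    hence "a*p \<le> exp (a*p) / exp 1" by (simp add: exp_diff)
    thus ?thesis by (simp add: exp_minus field_simps)
  qed
  have "a powr a / Gamma a * (exp (-a/u) / u powr (1+a)) * u * p \<le> exp 1 * a * exp (- (a * p)) * p"
    by (rule mult_right_mono[OF A p0])
  also have "\<dots> \<le> 1" using B by (simp add: algebra_simps)
  finally show ?thesis by (simp add: p_def)
qed



lemma qnorm:
  fixes a :: real assumes a: "a > 0"
  shows "(\<integral>\<^sup>+u. ennreal (a powr a / Gamma a * (exp (-a/u) / u powr (1+a))) * indicator {0<..} u \<partial>lborel) = 1"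
proof -
  define f where "f s = s powr (a-1) / exp s / Gamma a" for s :: real
  have Gpos: "Gamma a > 0" using a by (simp add: Gamma_real_pos)
  have "((\<lambda>s. s powr (a-1) / exp s / Gamma a) has_integral Gamma a / Gamma a) {0..}"
    using has_integral_divide[OF Gamma_integral_real[OF a], of "Gamma a"] by simp
  hence f0: "(f has_integral 1) {0..}" using Gpos unfolding f_def[abs_def] by simp
  have f1: "(f has_integral 1) {0<..}"
  proof -
    have "negligible {x \<in> {0..} - {0<..}. f x \<noteq> 0}"
      by (rule negligible_subset[of "{0}"]) auto
    moreover have "{x \<in> {0<..} - {0..}. f x \<noteq> (0::real)} = {}" by auto
    hence "negligible {x \<in> {0<..} - {0..}. f x \<noteq> (0::real)}" by (metis negligible_empty)
    ultimately show ?thesis using f0 has_integral_spike_set_eq by blast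
  qed
  have fabs: "f absolutely_integrable_on {0<..}"
    using f1 by (intro nonnegative_absolutely_integrable_1) (auto simp: f_def Gpos intro!: divide_nonneg_pos)
  have img: "(\<lambda>u. a / u) ` {0<..} = ({0<..}::real set)"
  proof
    show "(\<lambda>u. a / u) ` {0<..} \<subseteq> {0<..}" using a by auto
    show "{0<..} \<subseteq> (\<lambda>u. a / u) ` {0<..}"
    proof
      fix s :: real assume "s \<in> {0<..}"
      hence "s = a / (a / s)" "a / s \<in> {0<..}" using a by auto
      thus "s \<in> (\<lambda>u. a / u) ` {0<..}" by blast
    qed
  qed
  have inj: "inj_on (\<lambda>u. a / u) ({0<..}::real set)"
    using a by (auto simp: inj_on_def field_simps)
  have der: "((\<lambda>u. a / u) has_field_derivative (- a / u^2)) (at u within {0<..})" if "u \<in> {0<..}" for u :: real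
    using that by (auto intro!: derivative_eq_intros simp: power2_eq_square field_simps)
  have cv: "(\<lambda>u. \<bar>- a / u^2\<bar> * f (a / u)) absolutely_integrable_on {0<..} \<and>
        integral {0<..} (\<lambda>u. \<bar>- a / u^2\<bar> * f (a / u)) = 1"
    using has_absolute_integral_change_of_variables_1'[of "{0<..}" "\<lambda>u. a / u" "\<lambda>u. - a / u^2" f 1]
      der inj img fabs f1 by (simp add: integral_unique)
  hence hi: "((\<lambda>u. \<bar>- a / u^2\<bar> * f (a / u)) has_integral 1) {0<..}"
    by (metis absolutely_integrable_on_def has_integral_integral)
  have eq: "\<bar>- a / u^2\<bar> * f (a / u) = a powr a / Gamma a * (exp (-a/u) / u powr (1+a))" if "u > 0" for u :: real
  proof -
    have "\<bar>- a / u^2\<bar> = a / u^2" using a that by simp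
    moreover have "(a/u) powr (a-1) = a powr (a-1) / u powr (a-1)" using a that by (simp add: powr_divide)
    moreover have "a * a powr (a-1) = a powr a" using a by (simp add: powr_diff)
    moreover have "u^2 * u powr (a-1) = u powr (1+a)" using that
      by (simp add: powr_add powr_diff power2_eq_square field_simps)
    ultimately have "\<bar>- a / u^2\<bar> * f (a / u) = (a * a powr (a-1)) / (u^2 * u powr (a-1)) / exp (a/u) / Gamma a"
      using a that by (simp add: f_def)
    also have "\<dots> = a powr a / u powr (1+a) / exp (a/u) / Gamma a"
      by (simp only: \<open>a * a powr (a-1) = a powr a\<close> \<open>u^2 * u powr (a-1) = u powr (1+a)\<close>)
    finally show ?thesis by (simp add: exp_minus field_simps)
  qed
  have "(\<integral>\<^sup>+u. ennreal (\<bar>- a / u^2\<bar> * f (a / u)) * indicator {0<..} u \<partial>lborel) = ennreal 1"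
    by (rule nn_integral_has_integral_lebesgue'[OF _ hi]) (auto simp: f_def Gpos intro!: divide_nonneg_pos mult_nonneg_nonneg)
  moreover have "(\<integral>\<^sup>+u. ennreal (\<bar>- a / u^2\<bar> * f (a / u)) * indicator {0<..} u \<partial>lborel)
     = (\<integral>\<^sup>+u. ennreal (a powr a / Gamma a * (exp (-a/u) / u powr (1+a))) * indicator {0<..} u \<partial>lborel)"
    proof (intro nn_integral_cong)
    fix u :: real
    show "ennreal (\<bar>- a / u^2\<bar> * f (a / u)) * indicator {0<..} u =
          ennreal (a powr a / Gamma a * (exp (-a/u) / u powr (1+a))) * indicator {0<..} u"
      using eq[of u] by (cases "u > 0") auto
  qed
  ultimately show ?thesis by simp
qed



lemma Dgen:
  fixes g :: "real \<Rightarrow> real"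
  assumes c: "c > 0" and g: "(g has_real_derivative g') (at s)" and gs: "g s \<ge> 0"
  shows "((\<lambda>x. (1 + ln (1 + ln (1 + g x))) powr (-c) / c) has_real_derivative
     (- ((1 + ln (1 + ln (1 + g s))) powr (-c-1) * g' / ((1 + ln (1 + g s)) * (1 + g s))))) (at s)"
proof -
  have p1: "0 \<le> ln (1 + g s)" using gs by auto
  have p2: "0 \<le> ln (1 + ln (1 + g s))" using p1 by auto
  have d1: "((\<lambda>x. ln (1 + g x)) has_real_derivative (g' / (1 + g s))) (at s)"
    using gs by (auto intro!: derivative_eq_intros g simp: field_simps)
  have d2: "((\<lambda>x. 1 + ln (1 + ln (1 + g x))) has_real_derivative (g' / (1 + g s) / (1 + ln (1 + g s)))) (at s)"
    using p1 gs by (auto intro!: derivative_eq_intros d1 g simp: field_simps add_pos_nonneg)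
  have d3: "((\<lambda>x. (1 + ln (1 + ln (1 + g x))) powr (-c)) has_real_derivative
      ((-c) * (1 + ln (1 + ln (1 + g s))) powr (-c - 1) * (g' / (1 + g s) / (1 + ln (1 + g s))))) (at s)"
    apply (rule DERIV_cong[OF DERIV_powr[OF d2, of "\<lambda>_. -c" 0]])
    using p2 by (auto simp: powr_diff field_simps add_pos_nonneg)
  have pos: "(1 + ln (1 + g s)) * (1 + g s) > 0" using p1 gs by (intro mult_pos_pos; linarith)
  have gen: "\<And>A B L g' :: real. L * B > 0 \<Longrightarrow> (- c) * A * (g' / B / L) / c = - (A * g' / (L * B))"
    using c by (simp add: field_simps)
  show ?thesis
    apply (rule DERIV_cong[OF DERIV_cdivide[OF d3, of c]])
    by (rule gen[OF pos])
qed

definition Phi :: "real \<Rightarrow> real \<Rightarrow> real" where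
 "Phi c s = (1 + ln (1 + ln (1 + 1/s))) powr (-c) / c - (1 + ln (1 + ln (1 + s))) powr (-c) / c"

definition kf :: "real \<Rightarrow> real \<Rightarrow> real" where
 "kf c s = (1 + ln (1 + ln (1 + s))) powr (-c-1) / ((1 + ln (1 + s)) * (1 + s))
   + (1 + ln (1 + ln (1 + 1/s))) powr (-c-1) * (1 / s^2) / ((1 + ln (1 + 1/s)) * (1 + 1/s))"

lemma gen2: "-(A' * (-1/s^2) / D') - -(A*1/D) = A/D + A'*(1/s^2)/(D'::real)"
  by (simp add: divide_inverse algebra_simps)

lemma Phi_deriv: assumes c: "c > 0" and s: "s > 0" shows "(Phi c has_real_derivative kf c s) (at s)"
proof -
  have d1: "((\<lambda>x. x) has_real_derivative 1) (at s)" by (rule DERIV_ident)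
  have d2: "((\<lambda>x. 1 / x) has_real_derivative (- 1 / s^2)) (at s)"
    using s by (auto intro!: derivative_eq_intros simp: power2_eq_square field_simps)
  show ?thesis unfolding Phi_def[abs_def]
  proof (rule DERIV_cong[OF DERIV_diff[OF Dgen[OF c d2] Dgen[OF c d1]]])
    show "0 \<le> 1 / s" "0 \<le> s" using s by auto
  qed (unfold kf_def, rule gen2)
qed

lemma Phi_lim_top: assumes c: "c > 0" shows "(Phi c \<longlongrightarrow> inverse c) at_top"
  unfolding Phi_def using c by real_asymp

lemma Phi_lim_0: assumes c: "c > 0" shows "(Phi c \<longlongrightarrow> - inverse c) (at_right 0)"
  unfolding Phi_def using c by real_asymp

lemma kf_nonneg: assumes "s > 0" shows "kf c s \<ge> 0"
proof -
  have "0 \<le> ln (1 + s)" "0 \<le> ln (1 + 1/s)" using assms by auto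
  hence q: "0 < 1 + ln (1 + s)" "0 < 1 + ln (1 + 1/s)" by linarith+
  have r: "0 < 1 + 1/s" "0 < 1 + s" using assms by (auto simp: add_pos_pos)
  show ?thesis unfolding kf_def
    by (intro add_nonneg_nonneg divide_nonneg_pos mult_nonneg_nonneg mult_pos_pos q r) (use assms in auto)
qed

lemma kf_cont: assumes s: "s > 0" shows "isCont (kf c) s"
proof -
  have a: "0 \<le> ln (1 + s)" "0 \<le> ln (1 + 1/s)" using s by auto
  have b: "0 \<le> ln (1 + ln (1 + s))" "0 \<le> ln (1 + ln (1 + 1/s))" using a by auto
  have d: "0 < 1 + 1/s" "0 < 1 + s" using s by (auto simp: add_pos_pos)
  have e: "0 < 1 + ln (1 + s)" "0 < 1 + ln (1 + 1/s)" using a by linarith+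
  have f: "0 < 1 + ln (1 + ln (1 + s))" "0 < 1 + ln (1 + ln (1 + 1/s))" using b by linarith+
  have g: "s \<noteq> 0" "s^2 \<noteq> 0" using s by auto
  show ?thesis unfolding kf_def[abs_def]
    apply (intro continuous_intros)
    apply (simp_all only: d e f g mult_pos_pos less_imp_neq[symmetric] not_False_eq_True mult_eq_0_iff de_Morgan_disj)
    done
qed

lemma kf_integrable: assumes c: "c > 0"
  shows "(\<integral>\<^sup>+s. ennreal (kf c s) * indicator {0<..} s \<partial>lborel) < \<infinity>"
proof -
  have "set_integrable lborel (einterval 0 \<infinity>) (kf c)"
  proof (rule interval_integral_FTC_nonneg(1)[where F = "Phi c" and A = "- inverse c" and B = "inverse c"])
    show "(0::ereal) < \<infinity>" by simp
    show "\<And>x. 0 < ereal x \<Longrightarrow> ereal x < \<infinity> \<Longrightarrow> DERIV (Phi c) x :> kf c x"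
      using Phi_deriv[OF c] by simp
    show "\<And>x. 0 < ereal x \<Longrightarrow> ereal x < \<infinity> \<Longrightarrow> isCont (kf c) x"
      using kf_cont by simp
    show "AE x in lborel. 0 < ereal x \<longrightarrow> ereal x < \<infinity> \<longrightarrow> 0 \<le> kf c x"
      using kf_nonneg by simp
    show "((Phi c \<circ> real_of_ereal) \<longlongrightarrow> - inverse c) (at_right 0)"
      using Phi_lim_0[OF c] by (simp add: zero_ereal_def ereal_tendsto_simps)
    show "((Phi c \<circ> real_of_ereal) \<longlongrightarrow> inverse c) (at_left \<infinity>)"
      using Phi_lim_top[OF c] by (simp add: ereal_tendsto_simps)
  qed
  moreover have "einterval 0 \<infinity> = {0<..}" by (auto simp: einterval_def)
  ultimately have "integrable lborel (\<lambda>x. indicator {0<..} x *\<^sub>R kf c x)"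
    by (simp add: set_integrable_def)
  hence "(\<integral>\<^sup>+x. ennreal (norm (indicator {0<..} x *\<^sub>R kf c x)) \<partial>lborel) < \<infinity>"
    by (simp add: integrable_iff_bounded)
  moreover have "(\<integral>\<^sup>+x. ennreal (norm (indicator {0<..} x *\<^sub>R kf c x)) \<partial>lborel)
      = (\<integral>\<^sup>+s. ennreal (kf c s) * indicator {0<..} s \<partial>lborel)"
    by (intro nn_integral_cong) (auto simp: kf_nonneg split: split_indicator)
  ultimately show ?thesis by simp
qed



definition hf :: "real \<Rightarrow> real \<Rightarrow> real" where
 "hf c s = (1 / (1 + ln (1 + 1 / s))) * (1 / (1 + ln (1 + s)))
        * (1 / (1 + ln (1 + ln (1 + 1 / s))) powr (1 + c))
        * (1 / (1 + ln (1 + ln (1 + s))) powr (1 + c))"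

lemma hf_basic:
  assumes s: "s > 0" and c: "c > 0"
  shows "0 \<le> hf c s" "hf c s \<le> (1 / (1 + ln (1 + 1 / s))) * (1 / (1 + ln (1 + s)))"
proof -
  have l1: "0 \<le> ln (1 + s)" "0 \<le> ln (1 + 1/s)" using s by auto
  hence l2: "0 \<le> ln (1 + ln (1 + s))" "0 \<le> ln (1 + ln (1 + 1/s))" by auto
  have P: "1 \<le> (1 + ln (1 + ln (1 + s))) powr (1 + c)" "1 \<le> (1 + ln (1 + ln (1 + 1/s))) powr (1 + c)"
    using l2 c by (auto intro!: ge_one_powr_ge_zero)
  have A: "0 < 1 / (1 + ln (1 + 1 / s))" "0 < 1 / (1 + ln (1 + s))" using l1 by (auto simp: add_pos_nonneg)
  define X where "X = 1 / (1 + ln (1 + 1 / s)) * (1 / (1 + ln (1 + s)))"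
  have X0: "X > 0" using A by (simp add: X_def)
  have p1: "0 < 1 / (1 + ln (1 + ln (1 + 1 / s))) powr (1 + c)" "1 / (1 + ln (1 + ln (1 + 1 / s))) powr (1 + c) \<le> 1"
    using P by (auto simp: divide_le_eq_1)
  have p2: "0 < 1 / (1 + ln (1 + ln (1 + s))) powr (1 + c)" "1 / (1 + ln (1 + ln (1 + s))) powr (1 + c) \<le> 1"
    using P by (auto simp: divide_le_eq_1)
  have e: "hf c s = X * (1 / (1 + ln (1 + ln (1 + 1 / s))) powr (1 + c)) * (1 / (1 + ln (1 + ln (1 + s))) powr (1 + c))"
    by (simp add: hf_def X_def)
  show "0 \<le> hf c s" unfolding e using X0 p1 p2 by simp
  have "X * (1 / (1 + ln (1 + ln (1 + 1 / s))) powr (1 + c)) * (1 / (1 + ln (1 + ln (1 + s))) powr (1 + c)) \<le> X * 1 * 1"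
    using X0 p1 p2 by (intro mult_mono) auto
  thus "hf c s \<le> (1 / (1 + ln (1 + 1 / s))) * (1 / (1 + ln (1 + s)))" unfolding e by (simp add: X_def)
qed

lemma hf_le1: assumes s: "s > 0" and c: "c > 0" shows "hf c s \<le> 1"
proof -
  have l1: "0 \<le> ln (1 + s)" "0 \<le> ln (1 + 1/s)" using s by auto
  have "(1 / (1 + ln (1 + 1 / s))) * (1 / (1 + ln (1 + s))) \<le> 1 * 1"
    using l1 by (intro mult_mono) (auto simp: add_pos_nonneg)
  thus ?thesis using hf_basic[OF s c] by simp
qed

lemma hf_log: assumes s: "s > 0" and c: "c > 0" shows "hf c s \<le> 1 / (1 + \<bar>ln s\<bar>)"
proof -
  have l1: "0 \<le> ln (1 + s)" "0 \<le> ln (1 + 1/s)" using s by auto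
  have "(1 / (1 + ln (1 + 1 / s))) * (1 / (1 + ln (1 + s))) \<le> 1 / (1 + \<bar>ln s\<bar>)"
  proof (cases "s \<ge> 1")
    case True
    have "ln s \<le> ln (1 + s)" using s by simp
    moreover have "0 \<le> ln s" using True by simp
    ultimately have "1 / (1 + ln (1 + s)) \<le> 1 / (1 + \<bar>ln s\<bar>)" by (intro divide_left_mono) auto
    moreover have "1 / (1 + ln (1 + 1 / s)) \<le> 1" using l1 by auto
    moreover have "0 \<le> 1 / (1 + ln (1 + s))" using l1 by auto
    ultimately have "(1 / (1 + ln (1 + 1 / s))) * (1 / (1 + ln (1 + s))) \<le> 1 * (1 / (1 + ln (1 + s)))"
      by (intro mult_right_mono) auto
    thus ?thesis using \<open>1 / (1 + ln (1 + s)) \<le> 1 / (1 + \<bar>ln s\<bar>)\<close> by linarith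
  next
    case False
    have "ln (1/s) \<le> ln (1 + 1/s)" using s by (subst ln_le_cancel_iff) (auto simp: add_pos_pos)
    moreover have "ln (1/s) = \<bar>ln s\<bar>" using False s by (simp add: ln_div)
    ultimately have "1 / (1 + ln (1 + 1/s)) \<le> 1 / (1 + \<bar>ln s\<bar>)" by (intro divide_left_mono) auto
    moreover have "1 / (1 + ln (1 + s)) \<le> 1" using l1 by auto
    moreover have "0 \<le> 1 / (1 + ln (1 + 1/s))" "0 \<le> 1 / (1 + ln (1 + s))" using l1 by auto
    ultimately have "(1 / (1 + ln (1 + 1 / s))) * (1 / (1 + ln (1 + s))) \<le> (1 / (1 + ln (1 + 1 / s))) * 1"
      by (intro mult_left_mono) auto
    thus ?thesis using \<open>1 / (1 + ln (1 + 1/s)) \<le> 1 / (1 + \<bar>ln s\<bar>)\<close> by linarith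
  qed
  thus ?thesis using hf_basic[OF s c] by linarith
qed



lemma chain4a: fixes a b c d e :: real assumes "a \<le> b" "b \<le> c" "c = 2*d" "0 \<le> e" shows "a \<le> 2*(d+e)"
  using assms by (simp add: algebra_simps)
lemma chain4b: fixes a b c d e :: real assumes "a \<le> b" "b \<le> c" "c = 2*e" "0 \<le> d" shows "a \<le> 2*(d+e)"
  using assms by (simp add: algebra_simps)

lemma gen_kf:
  fixes p p' Y Y' s :: real
  assumes p: "0 \<le> p" "p \<le> 1" and p': "0 \<le> p'" "p' \<le> 1" and Y: "Y \<ge> 1" and Y': "Y' \<ge> 1" and s: "s > 0"
  shows "(1/Y') * (1/Y) * p' * p / s \<le> 2 * (p / (Y * (1 + s)) + p' * (1 / s^2) / (Y' * (1 + 1/s)))"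
proof -
  have e: "(1/Y') * (1/Y) * p' * p / s = ((1/Y') * p') * ((p / Y) * (1/s))" by (simp add: field_simps)
  have a1: "0 \<le> (1/Y') * p'" "(1/Y') * p' \<le> 1" "0 \<le> (1/Y) * p" "(1/Y) * p \<le> 1"
    using p p' Y Y' by (auto simp: field_simps)
  have t1: "0 \<le> p / (Y * (1 + s))" "0 \<le> p' * (1 / s^2) / (Y' * (1 + 1/s))"
    using p p' Y Y' s by (auto intro!: divide_nonneg_pos mult_pos_pos add_pos_pos)
  show ?thesis
  proof (cases "s \<ge> 1")
    case True
    have "((1/Y') * p') * ((p / Y) * (1/s)) \<le> 1 * ((p / Y) * (1/s))"
      using a1 s p Y by (intro mult_right_mono) auto
    hence h1: "((1/Y') * p') * ((p / Y) * (1/s)) \<le> ((p / Y) * (1/s))" by simp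
    have h2: "(p / Y) * (1/s) \<le> (p / Y) * (2 / (1 + s))"
      using True s p Y by (intro mult_left_mono) (auto simp: field_simps)
    have h3: "(p / Y) * (2 / (1 + s)) = 2 * (p / (Y * (1 + s)))" by simp
    show ?thesis unfolding e using chain4a[OF h1 h2 h3 t1(2)] .
  next
    case False
    have h0: "((1/Y') * p') * ((p / Y) * (1/s)) = ((p / Y)) * ((p' / Y') * (1/s))" by (simp add: ac_simps)
    have "((p / Y)) * ((p' / Y') * (1/s)) \<le> 1 * ((p' / Y') * (1/s))"
      using a1 s p' Y' by (intro mult_right_mono) auto
    hence h1: "((p / Y)) * ((p' / Y') * (1/s)) \<le> ((p' / Y') * (1/s))" by simp
    have "1 \<le> 2 / (1 + s)" using False s by (simp add: field_simps)
    hence "1/s * 1 \<le> 1/s * (2 / (1 + s))" using s by (intro mult_left_mono) auto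
    hence "1/s \<le> 2 / (s * (1 + s))" by simp
    hence h2: "(p' / Y') * (1/s) \<le> (p' / Y') * (2 / (s * (1 + s)))"
      using p' Y' by (intro mult_left_mono) auto
    have h3: "(p' / Y') * (2 / (s * (1 + s))) = 2 * (p' * (1 / s^2) / (Y' * (1 + 1/s)))"
      using s Y' by (simp add: field_simps power2_eq_square)
    show ?thesis unfolding e h0 using chain4b[OF h1 h2 h3 t1(1)] .
  qed
qed



lemma hf_kf: assumes s: "s > 0" and c: "c > 0" shows "hf c s / s \<le> 2 * kf c s"
proof -
  have l1: "0 \<le> ln (1 + s)" "0 \<le> ln (1 + 1/s)" using s by auto
  hence l2: "0 \<le> ln (1 + ln (1 + s))" "0 \<le> ln (1 + ln (1 + 1/s))" by auto
  have P: "1 \<le> (1 + ln (1 + ln (1 + s))) powr (1 + c)" "1 \<le> (1 + ln (1 + ln (1 + 1/s))) powr (1 + c)"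
    using l2 c by (auto intro!: ge_one_powr_ge_zero)
  have m: "-c-1 = -(1+c)" by simp
  have k: "kf c s = (1 / (1 + ln (1 + ln (1 + s))) powr (1 + c)) / ((1 + ln (1 + s)) * (1 + s))
     + (1 / (1 + ln (1 + ln (1 + 1/s))) powr (1 + c)) * (1 / s^2) / ((1 + ln (1 + 1/s)) * (1 + 1/s))"
    unfolding kf_def m powr_minus_divide ..
  show ?thesis unfolding k hf_def
    by (rule gen_kf) (use P l1 s in \<open>auto simp: divide_le_eq_1\<close>)
qed

lemma Ioi_sets[measurable]: "({0<..}::real set) \<in> sets borel" by simp

lemma kf_meas[measurable]: "kf c \<in> borel_measurable borel"
  unfolding kf_def[abs_def] by measurable

lemma hf_meas[measurable]: "hf c \<in> borel_measurable borel"
  unfolding hf_def[abs_def] by measurable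

lemma hf_int: assumes c: "c > 0"
  shows "(\<integral>\<^sup>+s. ennreal (hf c s / s) * indicator {0<..} s \<partial>lborel) < \<infinity>"
proof -
  have "(\<integral>\<^sup>+s. ennreal (hf c s / s) * indicator {0<..} s \<partial>lborel)
      \<le> (\<integral>\<^sup>+s. ennreal 2 * (ennreal (kf c s) * indicator {0<..} s) \<partial>lborel)"
  proof (intro nn_integral_mono)
    fix s :: real
    show "ennreal (hf c s / s) * indicator {0<..} s \<le> ennreal 2 * (ennreal (kf c s) * indicator {0<..} s)"
    proof (cases "s > 0")
      case True
      hence "ennreal (hf c s / s) \<le> ennreal (2 * kf c s)" using hf_kf[OF True c] by (intro ennreal_leI)
      thus ?thesis using True kf_nonneg[OF True] by (simp add: ennreal_mult)
    qed simp
  qed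
  also have "\<dots> = ennreal 2 * (\<integral>\<^sup>+s. ennreal (kf c s) * indicator {0<..} s \<partial>lborel)"
    by (intro nn_integral_cmult) measurable
  also have "\<dots> < \<infinity>" using kf_integrable[OF c] by (simp add: ennreal_mult_less_top)
  finally show ?thesis .
qed

lemma hf_scale: assumes w: "w > 0" and c: "c > 0"
  shows "(\<integral>\<^sup>+u. ennreal (hf c (w*u) / u) * indicator {0<..} u \<partial>lborel)
       = (\<integral>\<^sup>+s. ennreal (hf c s / s) * indicator {0<..} s \<partial>lborel)"
proof -
  let ?F = "\<lambda>s. ennreal (hf c s / s) * indicator {0<..} s"
  have mF: "?F \<in> borel_measurable borel" using hf_meas by measurable
  let ?G = "\<lambda>x. ennreal (hf c (w * x) / (w * x)) * indicator {0<..} x"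
  have "(\<integral>\<^sup>+s. ?F s \<partial>lborel) = ennreal \<bar>w\<bar> * (\<integral>\<^sup>+x. ?F (0 + w * x) \<partial>lborel)"
    using nn_integral_real_affine[OF mF, of w 0] w by simp
  also have "(\<integral>\<^sup>+x. ?F (0 + w * x) \<partial>lborel) = (\<integral>\<^sup>+x. ?G x \<partial>lborel)"
    using w by (intro nn_integral_cong) (simp add: zero_less_mult_iff split: split_indicator)
  also have "ennreal \<bar>w\<bar> * (\<integral>\<^sup>+x. ?G x \<partial>lborel) = ennreal w * (\<integral>\<^sup>+x. ?G x \<partial>lborel)"
    using w by simp
  also have "\<dots> = (\<integral>\<^sup>+x. ennreal w * ?G x \<partial>lborel)"
    by (rule nn_integral_cmult[symmetric]) measurable
  also have "\<dots> = (\<integral>\<^sup>+u. ennreal (hf c (w*u) / u) * indicator {0<..} u \<partial>lborel)"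
  proof (intro nn_integral_cong)
    fix x :: real
    show "ennreal w * ?G x = ennreal (hf c (w*x) / x) * indicator {0<..} x"
    proof (cases "x > 0")
      case True
      have "hf c (w*x) \<ge> 0" using hf_basic(1)[OF mult_pos_pos[OF w True] c] .
      hence "ennreal w * ennreal (hf c (w*x) / (w*x)) = ennreal (hf c (w*x) / x)"
        using w True by (simp add: ennreal_mult[symmetric])
      thus ?thesis using True w by simp
    next
      case False
      thus ?thesis using w by simp
    qed
  qed
  finally show ?thesis by simp
qed



lemma psi_big:
  fixes u K :: real assumes u: "u > 0" and K: "K > 2" and v: "\<bar>ln u\<bar> \<ge> K"
  shows "ln u + 1/u - 1 \<ge> K / 2"
proof (cases "ln u \<ge> 0")
  case True
  have "1/u > 0" using u by simp
  thus ?thesis using True v K by linarith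
next
  case False
  define y where "y = - ln u"
  have y: "y \<ge> K" using v False by (simp add: y_def)
  have "1/u = exp y" using u by (simp add: y_def exp_minus inverse_eq_divide)
  moreover have "1 + y + y^2/2 \<le> exp y" using y K by (intro exp_lower_Taylor_quadratic) auto
  moreover have "y \<le> y^2/2" using y K by (simp add: power2_eq_square)
  ultimately show ?thesis using y K by (simp add: y_def)
qed

theorem lemmaS7:
  fixes \<pi> :: "real \<Rightarrow> real" and c C M\<^sub>0 N t :: real and x :: "real ^ 'p"
  assumes dens: "prob_density_pos \<pi>"
    and c_pos: "c > 0" and C_pos: "C > 0" and M0_pos: "M\<^sub>0 > 0"
    and asym: "(\<lambda>s. s * \<pi> s) \<sim>[at_top] tailfun c C"
    and bound: "\<forall>s>0. s * \<pi> s \<le> M\<^sub>0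
        * (1 / (1 + ln (1 + 1 / s))) * (1 / (1 + ln (1 + s)))
        * (1 / (1 + ln (1 + ln (1 + 1 / s))) powr (1 + c))
        * (1 / (1 + ln (1 + ln (1 + s))) powr (1 + c))"
    and N_pos: "N > 0" and t_pos: "t > 0"
  shows "\<exists>M>0. \<forall>\<alpha> (\<beta>::real ^ 'p) \<gamma>. \<alpha> > 0 \<longrightarrow> \<gamma> > 0 \<longrightarrow> \<bar>ln t + x \<bullet> \<beta>\<bar> \<ge> N \<longrightarrow>
           fS \<pi> c C \<alpha> (x \<bullet> \<beta>) \<gamma> t \<le> ennreal (M * (1 + ln (1 + \<gamma>)))"
proof -
  define T where "T = tailfun c C t"
  have T0: "T > 0"
  proof -
    have "0 \<le> ln (1 + t)" using t_pos by simp
    moreover have "0 \<le> ln (1 + ln (1 + t))" using \<open>0 \<le> ln (1 + t)\<close> by simp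
    ultimately have "0 < 1 + ln (1 + t)" "0 < 1 + ln (1 + ln (1 + t))" by linarith+
    thus ?thesis using C_pos by (simp add: T_def tailfun_def)
  qed
  have gb: "s * \<pi> s \<le> M\<^sub>0 * hf c s" if "s > 0" for s
    using bound that by (simp add: hf_def mult.assoc)
  define IH where "IH = (\<integral>\<^sup>+s. ennreal (hf c s / s) * indicator {0<..} s \<partial>lborel)"
  have IHfin: "IH < \<infinity>" using hf_int[OF c_pos] by (simp add: IH_def)
  define Ih where "Ih = enn2real IH"
  have IH_eq: "IH = ennreal Ih" using IHfin by (simp add: Ih_def)
  have Ih0: "Ih \<ge> 0" by (simp add: Ih_def)
  define G0 where "G0 = max 1 (4 / N)"
  define K1 where "K1 = G0 * M\<^sub>0 / T"
  define K2 where "K2 = 2 * M\<^sub>0 / (N * T) + 4 * M\<^sub>0 / (N * T) * Ih"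
  define M where "M = max K1 K2"
  have G0: "G0 \<ge> 1" "G0 \<ge> 4 / N" by (auto simp: G0_def)
  have K1: "K1 > 0" using G0 M0_pos T0 by (simp add: K1_def)
  have K2: "K2 \<ge> 0" using M0_pos T0 N_pos Ih0 by (simp add: K2_def)
  have M0: "M > 0" using K1 by (simp add: M_def)
  show ?thesis
  proof (intro exI[of _ M] conjI allI impI M0)
    fix \<alpha> :: real and \<beta> :: "real ^ 'p" and \<gamma> :: real
    assume a0: "\<alpha> > 0" and g0: "\<gamma> > 0" and aN: "\<bar>ln t + x \<bullet> \<beta>\<bar> \<ge> N"
    define z where "z = x \<bullet> \<beta>"
    define a where "a = ln t + z"
    define w where "w = t powr \<gamma> * exp (\<gamma> * z)"
    have w_eq: "w = exp (\<gamma> * a)" using t_pos by (simp add: w_def a_def powr_def exp_add[symmetric] algebra_simps)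
    have w0: "w > 0" by (simp add: w_eq)
    have aN': "\<bar>a\<bar> \<ge> N" using aN by (simp add: a_def z_def)
    define q where "q u = \<alpha> powr \<alpha> / Gamma \<alpha> * (exp (-\<alpha>/u) / u powr (1+\<alpha>))" for u
    have q0: "q u \<ge> 0" if "u > 0" for u
      using that a0 by (simp add: q_def Gamma_real_pos)
    have qint: "(\<integral>\<^sup>+u. ennreal (q u) * indicator {0<..} u \<partial>lborel) = 1"
      using qnorm[OF a0] by (simp add: q_def)
    have qmeas: "(\<lambda>u. ennreal (q u) * indicator {0<..} u) \<in> borel_measurable lborel"
      unfolding q_def by measurable
    have fS_eq: "fS \<pi> c C \<alpha> z \<gamma> t = (\<integral>\<^sup>+u. ennreal (\<gamma> * q u * (w * u * \<pi> (w * u)) / T) * indicator {0<..} u \<partial>lborel)"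
      unfolding fS_def w_def T_def q_def by (intro nn_integral_cong) (simp add: field_simps)
    have main_pt: "\<gamma> * q u * (w * u * \<pi> (w * u)) / T \<le> \<gamma> * q u * M\<^sub>0 * hf c (w * u) / T" if "u > 0" for u
    proof -
      have "w * u * \<pi> (w * u) \<le> M\<^sub>0 * hf c (w * u)" using gb[of "w*u"] w0 that by simp
      hence "(\<gamma> * q u) * (w * u * \<pi> (w * u)) \<le> (\<gamma> * q u) * (M\<^sub>0 * hf c (w * u))"
        using g0 q0[OF that] by (intro mult_left_mono) auto
      thus ?thesis using T0 by (simp add: divide_right_mono mult.assoc)
    qed
    have "fS \<pi> c C \<alpha> z \<gamma> t \<le> ennreal M"
    proof (cases "\<gamma> \<le> G0")
      case True
      have "fS \<pi> c C \<alpha> z \<gamma> t \<le> (\<integral>\<^sup>+u. ennreal K1 * (ennreal (q u) * indicator {0<..} u) \<partial>lborel)"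
        unfolding fS_eq
      proof (intro nn_integral_mono)
        fix u :: real
        show "ennreal (\<gamma> * q u * (w * u * \<pi> (w * u)) / T) * indicator {0<..} u
              \<le> ennreal K1 * (ennreal (q u) * indicator {0<..} u)"
        proof (cases "u > 0")
          case True
          have h: "0 \<le> hf c (w*u)" "hf c (w*u) \<le> 1"
            using hf_basic(1)[OF mult_pos_pos[OF w0 True] c_pos] hf_le1[OF mult_pos_pos[OF w0 True] c_pos] by auto
          have "\<gamma> * q u * M\<^sub>0 * hf c (w * u) \<le> G0 * q u * M\<^sub>0 * 1"
            using h \<open>\<gamma> \<le> G0\<close> g0 q0[OF True] M0_pos by (intro mult_mono) (auto intro!: mult_nonneg_nonneg)
          hence "\<gamma> * q u * M\<^sub>0 * hf c (w * u) / T \<le> K1 * q u"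
            using T0 by (simp add: K1_def divide_right_mono field_simps)
          hence "ennreal (\<gamma> * q u * (w * u * \<pi> (w * u)) / T) \<le> ennreal (K1 * q u)"
            using main_pt[OF True] by (intro ennreal_leI) linarith
          thus ?thesis using True K1 q0[OF True] by (simp add: ennreal_mult)
        qed simp
      qed
      also have "\<dots> = ennreal K1" using qmeas qint by (simp add: nn_integral_cmult)
      also have "\<dots> \<le> ennreal M" by (intro ennreal_leI) (simp add: M_def)
      finally show ?thesis .
    next
      case False
      hence gbig: "\<gamma> > G0" by simp
      have "G0 * N < \<gamma> * N" using gbig N_pos by (intro mult_strict_right_mono)
      moreover have "4 \<le> G0 * N" using G0(2) N_pos by (simp add: field_simps)
      ultimately have gN: "\<gamma> * N > 4" by linarith
      define A where "A = 2 * M\<^sub>0 / (N * T)"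
      define B where "B = 4 * M\<^sub>0 / (N * T)"
      have A0: "A \<ge> 0" "B \<ge> 0" using M0_pos N_pos T0 by (auto simp: A_def B_def)
      have pt: "\<gamma> * q u * (w * u * \<pi> (w * u)) / T \<le> A * q u + B * (hf c (w * u) / u)" if u: "u > 0" for u
      proof -
        have wu: "w * u > 0" using w0 u by simp
        have h0: "0 \<le> hf c (w*u)" using hf_basic(1)[OF wu c_pos] .
        have lnwu: "ln (w * u) = \<gamma> * a + ln u" using w0 u by (simp add: ln_mult w_eq)
        have "\<gamma> * q u * M\<^sub>0 * hf c (w * u) / T \<le> A * q u + B * (hf c (w * u) / u)"
        proof (cases "\<bar>ln u\<bar> < \<gamma> * \<bar>a\<bar> / 2")
          case True
          have "\<gamma> * \<bar>a\<bar> \<le> \<bar>\<gamma> * a + ln u\<bar> + \<bar>ln u\<bar>" using g0 by (simp add: abs_mult)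
          hence big: "\<bar>ln (w * u)\<bar> \<ge> \<gamma> * N / 2"
            using True lnwu aN' g0 mult_left_mono[OF aN', of \<gamma>] by linarith
          have "hf c (w*u) \<le> 1 / (1 + \<bar>ln (w * u)\<bar>)" by (rule hf_log[OF wu c_pos])
          also have "\<dots> \<le> 1 / (1 + \<gamma> * N / 2)"
          proof -
            have pos1: "0 < 1 + \<gamma> * N / 2" using g0 N_pos by (simp add: add_pos_pos)
            have pos2: "0 < 1 + \<bar>ln (w * u)\<bar>" by (simp add: add_pos_nonneg)
            show ?thesis
              by (rule divide_left_mono) (use big in linarith, simp, rule mult_pos_pos[OF pos2 pos1])
          qed
          finally have hb: "hf c (w*u) \<le> 1 / (1 + \<gamma> * N / 2)" .
          have gh1: "\<gamma> * hf c (w*u) \<le> \<gamma> * (1 / (1 + \<gamma> * N / 2))"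
            using hb g0 by (intro mult_left_mono) auto
          have pos1: "0 < 1 + \<gamma> * N / 2" using g0 N_pos by (simp add: add_pos_pos)
          have gh2: "\<gamma> * (1 / (1 + \<gamma> * N / 2)) \<le> 2 / N"
            using pos1 N_pos by (simp add: field_simps)
          have gh: "\<gamma> * hf c (w*u) \<le> 2 / N" using gh1 gh2 by linarith
          have "\<gamma> * q u * M\<^sub>0 * hf c (w * u) / T = (q u * M\<^sub>0 / T) * (\<gamma> * hf c (w*u))" by simp
          also have "\<dots> \<le> (q u * M\<^sub>0 / T) * (2 / N)"
            using gh q0[OF u] M0_pos T0 by (intro mult_left_mono) auto
          also have "\<dots> = A * q u" by (simp add: A_def ac_simps)
          finally show ?thesis using A0 h0 u by (simp add: add_increasing2)
        next
          case False
          have v: "\<bar>ln u\<bar> \<ge> \<gamma> * N / 2"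
            using False mult_left_mono[OF aN', of \<gamma>] g0 by linarith
          have psi: "ln u + 1/u - 1 \<ge> \<gamma> * N / 4"
            using psi_big[OF u _ v] gN by simp
          have "0 < \<gamma> * N / 4" using g0 N_pos by simp
          hence psi0: "ln u + 1/u - 1 > 0" using psi by linarith
          have qb: "q u * u * (ln u + 1/u - 1) \<le> 1" using qbound[OF a0 u] by (simp add: q_def)
          have "\<gamma> * q u \<le> 4 / (N * u)"
          proof -
            have "q u * u * (\<gamma> * N / 4) \<le> q u * u * (ln u + 1/u - 1)"
              using psi q0[OF u] u by (intro mult_left_mono) auto
            hence "q u * u * (\<gamma> * N / 4) \<le> 1" using qb by linarith
            thus ?thesis using u N_pos by (simp add: field_simps)
          qed
          hence "\<gamma> * q u * M\<^sub>0 * hf c (w * u) / T \<le> 4 / (N * u) * M\<^sub>0 * hf c (w * u) / T"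
            using M0_pos h0 T0 by (intro divide_right_mono mult_right_mono) auto
          also have "\<dots> = B * (hf c (w * u) / u)" by (simp add: B_def)
          finally show ?thesis using A0 q0[OF u] by (simp add: add_increasing)
        qed
        thus ?thesis using main_pt[OF u] by linarith
      qed
      have "fS \<pi> c C \<alpha> z \<gamma> t \<le> (\<integral>\<^sup>+u. ennreal A * (ennreal (q u) * indicator {0<..} u)
               + ennreal B * (ennreal (hf c (w * u) / u) * indicator {0<..} u) \<partial>lborel)"
        unfolding fS_eq
      proof (intro nn_integral_mono)
        fix u :: real
        show "ennreal (\<gamma> * q u * (w * u * \<pi> (w * u)) / T) * indicator {0<..} u
              \<le> ennreal A * (ennreal (q u) * indicator {0<..} u)
               + ennreal B * (ennreal (hf c (w * u) / u) * indicator {0<..} u)"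
        proof (cases "u > 0")
          case True
          have h0: "0 \<le> hf c (w*u) / u" using hf_basic(1)[OF mult_pos_pos[OF w0 True] c_pos] True by simp
          have "ennreal (\<gamma> * q u * (w * u * \<pi> (w * u)) / T) \<le> ennreal (A * q u + B * (hf c (w * u) / u))"
            by (intro ennreal_leI pt True)
          also have "\<dots> = ennreal (A * q u) + ennreal (B * (hf c (w * u) / u))"
            by (rule ennreal_plus) (use A0 q0[OF True] h0 in \<open>auto intro!: mult_nonneg_nonneg simp del: times_divide_eq_right\<close>)
          also have "\<dots> = ennreal A * ennreal (q u) + ennreal B * ennreal (hf c (w * u) / u)"
            using A0 q0[OF True] h0 by (simp add: ennreal_mult del: times_divide_eq_right)
          finally show ?thesis using True by simp
        qed simp
      qed
      also have "\<dots> = ennreal A * (\<integral>\<^sup>+u. ennreal (q u) * indicator {0<..} u \<partial>lborel)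
          + ennreal B * (\<integral>\<^sup>+u. ennreal (hf c (w * u) / u) * indicator {0<..} u \<partial>lborel)"
      proof -
        have m1: "(\<lambda>u. ennreal A * (ennreal (q u) * indicator {0<..} u)) \<in> borel_measurable borel"
          unfolding q_def by measurable
        have m2: "(\<lambda>u. ennreal B * (ennreal (hf c (w * u) / u) * indicator {0<..} u)) \<in> borel_measurable borel"
          by measurable
        have m3: "(\<lambda>u. ennreal (q u) * indicator {0<..} u) \<in> borel_measurable borel"
          unfolding q_def by measurable
        have m4: "(\<lambda>u. ennreal (hf c (w * u) / u) * indicator {0<..} u) \<in> borel_measurable borel"
          by measurable
        show ?thesis
          using m1 m2 m3 m4 by (simp add: nn_integral_add nn_integral_cmult)
      qed
      also have "\<dots> = ennreal A + ennreal B * ennreal Ih"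
        using qint hf_scale[OF w0 c_pos] IH_eq by (simp add: IH_def)
      also have "\<dots> = ennreal K2"
      proof -
        have "ennreal B * ennreal Ih = ennreal (B * Ih)" using A0 Ih0 by (simp add: ennreal_mult)
        moreover have "ennreal A + ennreal (B * Ih) = ennreal (A + B * Ih)"
          using A0 Ih0 by (simp add: ennreal_plus)
        moreover have "A + B * Ih = K2" by (simp add: K2_def A_def B_def)
        ultimately show ?thesis by simp
      qed
      also have "\<dots> \<le> ennreal M" by (intro ennreal_leI) (simp add: M_def)
      finally show ?thesis .
    qed
    also have "ennreal M \<le> ennreal (M * (1 + ln (1 + \<gamma>)))"
    proof (intro ennreal_leI)
      have "0 \<le> ln (1 + \<gamma>)" using g0 by simp
      thus "M \<le> M * (1 + ln (1 + \<gamma>))" using M0 by (simp add: field_simps)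
    qed
    finally show "fS \<pi> c C \<alpha> (x \<bullet> \<beta>) \<gamma> t \<le> ennreal (M * (1 + ln (1 + \<gamma>)))" by (simp add: z_def)
  qed
qed


end
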